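(* Let $\mathbf{u}\in\mathbb{R}^m$ be a fixed vector, let $\mathbf{R}\in\mathbb{R}^{m\times n}$ be a random matrix such that either each row $\mathbf{R}_i$ is sampled i.i.d. from an isotropic distribution $P$ on $\mathbb{R}^n$, or $\hat{\mathbf{R}}$ is a randomly generated matrix with orthogonal rows, and let $\mathbf{z}\in\mathbb{R}^n$ have coordinates $\mathbf{z}_i$ i.i.d. $\mathrm{Bernoulli}(0.5)$, independent of $\mathbf{R}$. Let $\mathbf{v}=\sqrt{2}\cdot\mathbf{z}\odot\left(\hat{\mathbf{R}}^T\mathbf{u}\right)$. Then $\mathbb{E}[\lVert\mathbf{v}\rVert^2]=\lVert\mathbf{u}\rVert^2$.
   Context: For a matrix $\mathbf{R}$ with nonzero rows $\mathbf{R}_i$, $\hat{\mathbf{R}}$ denotes the matrix whose $i$-th row is $\mathbf{R}_i/\lVert\mathbf{R}_i\rVert_2$. A distribution $P$ on $\mathbb{R}^n$ is isotropic if it is invariant under all orthogonal transformations (all directions equally likely), with no mass at the origin. "Randomly generated matrix with orthogonal rows" means $\hat{\mathbf{R}}$ has orthonormal rows (so $m\le n$), drawn uniformly over all rotations. $\odot$ is the coordinatewise (Hadamard) product. *)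

theory Defs
  imports "HOL-Probability.Probability"
begin

definition rownormalize :: "real^'n^'m \<Rightarrow> real^'n^'m" where
  "rownormalize R = (\<chi> i. (1 / norm (R $ i)) *\<^sub>R (R $ i))"

definition isotropic :: "(real^'n) measure \<Rightarrow> bool" where
  "isotropic P \<longleftrightarrow> prob_space P \<and> sets P = sets borel \<and> emeasure P {0} = 0 \<and>
     (\<forall>Q::real^'n^'n. orthogonal_matrix Q \<longrightarrow> distr P borel (\<lambda>x. Q *v x) = P)"

definition orthonormal_rows :: "real^'n^'m \<Rightarrow> bool" where
  "orthonormal_rows A \<longleftrightarrow> (\<forall>i k. (A $ i) \<bullet> (A $ k) = (if i = k then 1 else 0))"

definition rows_iid_isotropic :: "'a measure \<Rightarrow> ('a \<Rightarrow> real^'n^'m) \<Rightarrow> bool" where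
  "rows_iid_isotropic M R \<longleftrightarrow> (\<exists>P. isotropic P \<and>
     prob_space.indep_vars M (\<lambda>_. borel) (\<lambda>i \<omega>. R \<omega> $ i) UNIV \<and>
     (\<forall>i. distr M borel (\<lambda>\<omega>. R \<omega> $ i) = P))"

text \<open>Case 2: the row-normalised matrix has orthonormal rows (a.s.) and is uniformly
  distributed over rotations, i.e. its law is invariant under right multiplication by
  every orthogonal n x n matrix (Haar measure on the Stiefel manifold).\<close>
definition uniform_orthonormal_rows :: "'a measure \<Rightarrow> ('a \<Rightarrow> real^'n^'m) \<Rightarrow> bool" where
  "uniform_orthonormal_rows M R \<longleftrightarrow>
     (AE \<omega> in M. orthonormal_rows (rownormalize (R \<omega>))) \<and>
     (\<forall>Q::real^'n^'n. orthogonal_matrix Q \<longrightarrow>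
        distr M borel (\<lambda>\<omega>. rownormalize (R \<omega>) ** Q) = distr M borel (\<lambda>\<omega>. rownormalize (R \<omega>)))"

end

theory Submission
  imports Defs
begin

definition nr :: "real^'n \<Rightarrow> real^'n" where "nr x = (1 / norm x) *\<^sub>R x"

lemma meas_vnth[measurable (raw)]:
  fixes f :: "'a \<Rightarrow> 'b::{real_normed_vector,second_countable_topology}^'n"
  shows "f \<in> borel_measurable M \<Longrightarrow> (\<lambda>x. f x $ i) \<in> borel_measurable M"
  by (rule measurable_compose[OF _ borel_measurable_continuous_onI]) (auto intro: continuous_intros)

lemma meas_nr[measurable (raw)]: "f \<in> borel_measurable M \<Longrightarrow> (\<lambda>x. nr (f x)) \<in> borel_measurable M"
  unfolding nr_def by measurable

lemma negI_mult: "(- mat 1 :: real^'n^'n) *v x = - x"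
proof -
  have "(- mat 1 :: real^'n^'n) *v x = - (mat 1 *v x)"
    by (simp add: vec_eq_iff matrix_vector_mult_def sum_negf)
  then show ?thesis by simp
qed

lemma orth_negI: "orthogonal_matrix (- mat 1 :: real^'n^'n)"
proof -
  have t: "transpose (- mat 1 :: real^'n^'n) = - mat 1"
    by (simp add: vec_eq_iff transpose_def mat_def)
  have m0: "(- mat 1 :: real^'n^'n) ** (- mat 1) = mat 1 ** mat 1"
    by (simp add: vec_eq_iff matrix_matrix_mult_def)
  have m: "(- mat 1 :: real^'n^'n) ** (- mat 1) = mat 1"
    unfolding m0 by simp
  show ?thesis using t m by (simp add: orthogonal_matrix_def)
qed

lemma nr_norm: "norm (nr x) \<le> 1"
  by (cases "x = 0") (simp_all add: nr_def)

lemma nr_comp: "\<bar>nr x $ j\<bar> \<le> 1"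
  using component_le_norm_cart[of "nr x" j] nr_norm[of x] by linarith

lemma nr_inner_self: "x \<noteq> 0 \<Longrightarrow> nr x \<bullet> nr x = 1"
  by (simp add: nr_def power2_norm_eq_inner[symmetric] power2_eq_square)

lemma nr_inner_bound: "\<bar>nr x \<bullet> nr y\<bar> \<le> 1"
proof -
  have "\<bar>nr x \<bullet> nr y\<bar> \<le> norm (nr x) * norm (nr y)" by (rule Cauchy_Schwarz_ineq2)
  also have "\<dots> \<le> 1 * 1" by (intro mult_mono nr_norm) auto
  finally show ?thesis by simp
qed

lemma nr_neg: "nr (- x) = - nr x"
  by (simp add: nr_def)

lemma normsq_vec: "(norm (v::real^'n))\<^sup>2 = (\<Sum>j\<in>UNIV. (v $ j)\<^sup>2)"
  unfolding power2_norm_eq_inner inner_vec_def by (simp add: power2_eq_square)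

lemma (in prob_space) indep_var_from_prod:
  fixes X Y :: "'a \<Rightarrow> real"
  assumes X: "X \<in> borel_measurable M" and Y: "Y \<in> borel_measurable M"
  and P: "\<And>A B. A \<in> sets borel \<Longrightarrow> B \<in> sets borel \<Longrightarrow>
     prob (X -` A \<inter> space M \<inter> (Y -` B \<inter> space M)) = prob (X -` A \<inter> space M) * prob (Y -` B \<inter> space M)"
  shows "indep_var borel X borel Y"
proof -
  have eq: "(\<lambda>i. {case_bool X Y i -` A \<inter> space M |A. A \<in> sets (case_bool borel borel i)})
     = case_bool {X -` A \<inter> space M |A. A \<in> sets borel} {Y -` A \<inter> space M |A. A \<in> sets borel}"
    by (rule ext) (simp split: bool.split)
  have "indep_set {X -` A \<inter> space M |A. A \<in> sets borel} {Y -` A \<inter> space M |A. A \<in> sets borel}"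
    unfolding indep_sets2_eq using X Y P by (auto simp: measurable_sets)
  then show ?thesis unfolding indep_var_def indep_vars_def2 eq indep_set_def[symmetric]
    using X Y by (auto split: bool.split)
qed

lemma E_ik:
  fixes M :: "'a measure" and R :: "'a \<Rightarrow> real^'n^'m"
  assumes "prob_space M" and Rm[measurable]: "R \<in> borel_measurable M"
    and "rows_iid_isotropic M R \<or> uniform_orthonormal_rows M R"
  shows "prob_space.expectation M (\<lambda>\<omega>. nr (R \<omega> $ i) \<bullet> nr (R \<omega> $ k)) = (if i = k then 1 else 0)"
proof -
  interpret prob_space M by fact
  show ?thesis
  proof (cases "rows_iid_isotropic M R")
    case True
    then obtain P where iso: "isotropic P"
      and ind: "indep_vars (\<lambda>_. borel) (\<lambda>i \<omega>. R \<omega> $ i) UNIV"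
      and dist: "\<And>i. distr M borel (\<lambda>\<omega>. R \<omega> $ i) = P"
      unfolding rows_iid_isotropic_def by blast
    from iso have sP: "sets P = sets borel" and e0: "emeasure P {0} = 0"
      and inv: "\<And>Q::real^'n^'n. orthogonal_matrix Q \<Longrightarrow> distr P borel (\<lambda>x. Q *v x) = P"
      unfolding isotropic_def by auto
    show ?thesis
    proof (cases "i = k")
      case True
      have "emeasure M ((\<lambda>\<omega>. R \<omega> $ i) -` {0} \<inter> space M) = 0"
        using e0 dist[of i] emeasure_distr[of "\<lambda>\<omega>. R \<omega> $ i" M borel "{0}"] by simp
      moreover have "(\<lambda>\<omega>. R \<omega> $ i) -` {0} \<inter> space M \<in> sets M" by measurable
      ultimately have AE0: "AE \<omega> in M. R \<omega> $ i \<noteq> 0"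
        by (intro AE_I'[where N="(\<lambda>\<omega>. R \<omega> $ i) -` {0} \<inter> space M"]) (auto simp: null_sets_def)
      have "expectation (\<lambda>\<omega>. nr (R \<omega> $ i) \<bullet> nr (R \<omega> $ k)) = expectation (\<lambda>\<omega>. 1)"
        by (rule integral_cong_AE) (use AE0 True nr_inner_self in auto)
      then show ?thesis using True by (simp add: prob_space)
    next
      case False
      have mz: "expectation (\<lambda>\<omega>. nr (R \<omega> $ l) $ j) = 0" for l j
      proof -
        define h where "h x = nr x $ j" for x :: "real^'n"
        have hm[measurable]: "h \<in> borel_measurable borel" unfolding h_def by measurable
        have 1: "expectation (\<lambda>\<omega>. nr (R \<omega> $ l) $ j) = integral\<^sup>L P h"
          using integral_distr[of "\<lambda>\<omega>. R \<omega> $ l" M borel h] dist[of l] by (simp add: h_def)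
        have "integral\<^sup>L P h = integral\<^sup>L (distr P borel (\<lambda>x. (- mat 1 :: real^'n^'n) *v x)) h"
          using inv[OF orth_negI] by simp
        also have "\<dots> = integral\<^sup>L P (\<lambda>x. h ((- mat 1 :: real^'n^'n) *v x))"
        proof (rule integral_distr)
          have "(\<lambda>x::real^'n. - x) \<in> measurable P borel"
            by (subst measurable_cong_sets[OF sP refl]) simp
          then show "(\<lambda>x. (- mat 1 :: real^'n^'n) *v x) \<in> measurable P borel"
            by (simp add: negI_mult)
        qed simp
        also have "\<dots> = integral\<^sup>L P (\<lambda>x. - h x)"
          by (simp add: negI_mult h_def nr_neg)
        also have "\<dots> = - integral\<^sup>L P h" by simp
        finally show ?thesis using 1 by simp
      qed
      have indj: "indep_var borel (\<lambda>\<omega>. nr (R \<omega> $ i) $ j) borel (\<lambda>\<omega>. nr (R \<omega> $ k) $ j)" for j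
      proof -
        have r: "indep_var (PiM {i} (\<lambda>_. borel)) (\<lambda>\<omega>. restrict (\<lambda>l. R \<omega> $ l) {i})
                 (PiM {k} (\<lambda>_. borel)) (\<lambda>\<omega>. restrict (\<lambda>l. R \<omega> $ l) {k})"
          using False by (intro indep_var_restrict[OF ind]) auto
        have m1: "(\<lambda>f. nr (f i) $ j) \<in> borel_measurable (PiM {i} (\<lambda>_. borel :: (real^'n) measure))"
          by measurable
        have m2: "(\<lambda>f. nr (f k) $ j) \<in> borel_measurable (PiM {k} (\<lambda>_. borel :: (real^'n) measure))"
          by measurable
        from indep_var_compose[OF r m1 m2] show ?thesis by (simp add: comp_def)
      qed
      have intg: "integrable M (\<lambda>\<omega>. nr (R \<omega> $ l) $ j)" for l j
        by (rule integrable_const_bound[where B=1]) (auto simp: nr_comp)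
      have "expectation (\<lambda>\<omega>. nr (R \<omega> $ i) \<bullet> nr (R \<omega> $ k))
          = expectation (\<lambda>\<omega>. \<Sum>j\<in>UNIV. nr (R \<omega> $ i) $ j * nr (R \<omega> $ k) $ j)"
        by (simp add: inner_vec_def)
      also have "\<dots> = (\<Sum>j\<in>UNIV. expectation (\<lambda>\<omega>. nr (R \<omega> $ i) $ j * nr (R \<omega> $ k) $ j))"
        by (rule Bochner_Integration.integral_sum) (rule indep_var_integrable[OF indj intg intg])
      also have "\<dots> = 0"
        by (simp add: indep_var_lebesgue_integral[OF indj intg intg] mz)
      finally show ?thesis using False by simp
    qed
  next
    case False
    then have U: "uniform_orthonormal_rows M R" using assms(3) by blast
    then have AE1: "AE \<omega> in M. orthonormal_rows (rownormalize (R \<omega>))"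
      unfolding uniform_orthonormal_rows_def by blast
    have rn: "rownormalize A $ l = nr (A $ l)" for A :: "real^'n^'m" and l
      by (simp add: rownormalize_def nr_def)
    have "expectation (\<lambda>\<omega>. nr (R \<omega> $ i) \<bullet> nr (R \<omega> $ k)) = expectation (\<lambda>\<omega>. if i = k then 1 else 0)"
      by (rule integral_cong_AE) (use AE1 in \<open>auto simp: orthonormal_rows_def rn\<close>)
    then show ?thesis by (simp add: prob_space)
  qed
qed

theorem theorem2:
  fixes M :: "'a measure"
    and u :: "real^'m"
    and R :: "'a \<Rightarrow> real^'n^'m"
    and z :: "'a \<Rightarrow> real^'n"
  assumes "prob_space M"
    and "R \<in> borel_measurable M"
    and "z \<in> borel_measurable M"
    and "rows_iid_isotropic M R \<or> uniform_orthonormal_rows M R"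
    and "\<And>j. AE \<omega> in M. z \<omega> $ j \<in> {0, 1}"
    and "\<And>j. measure M {\<omega> \<in> space M. z \<omega> $ j = 1} = 1 / 2"
    and "prob_space.indep_vars M (\<lambda>_. borel) (\<lambda>j \<omega>. z \<omega> $ j) UNIV"
    and "\<And>A B. A \<in> sets (borel :: (real^'n^'m) measure) \<Longrightarrow> B \<in> sets (borel :: (real^'n) measure) \<Longrightarrow>
           measure M {\<omega> \<in> space M. R \<omega> \<in> A \<and> z \<omega> \<in> B}
           = measure M {\<omega> \<in> space M. R \<omega> \<in> A} * measure M {\<omega> \<in> space M. z \<omega> \<in> B}"
  shows "prob_space.expectation M
           (\<lambda>\<omega>. (norm (sqrt 2 *\<^sub>R (\<chi> j. z \<omega> $ j * (transpose (rownormalize (R \<omega>)) *v u) $ j)))\<^sup>2)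
         = (norm u)\<^sup>2"
proof -
  interpret prob_space M by fact
  note Rm[measurable] = assms(2)
  note zm[measurable] = assms(3)
  define G where "G x = (\<Sum>i\<in>UNIV. u $ i *\<^sub>R nr (x $ i))" for x :: "real^'n^'m"
  define g where "g j x = (\<Sum>i\<in>UNIV. nr (x $ i) $ j * u $ i)" for j and x :: "real^'n^'m"
  have gm[measurable]: "g j \<in> borel_measurable borel" for j unfolding g_def by measurable
  have gG: "g j x = G x $ j" for j x
    by (simp add: g_def G_def sum_component mult.commute)
  have Wc: "(transpose (rownormalize (R \<omega>)) *v u) $ j = g j (R \<omega>)" for \<omega> j
    by (simp add: g_def matrix_vector_mult_def transpose_def rownormalize_def nr_def mult.commute)
  have gbound: "\<bar>g j x\<bar> \<le> (\<Sum>i\<in>UNIV. \<bar>u $ i\<bar>)" for j x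
    unfolding g_def
  proof (rule order_trans[OF sum_abs], rule sum_mono)
    fix i show "\<bar>nr (x $ i) $ j * u $ i\<bar> \<le> \<bar>u $ i\<bar>"
      unfolding abs_mult by (rule mult_left_le_one_le) (auto simp: nr_comp)
  qed
  define C where "C = (\<Sum>i\<in>UNIV. \<bar>u $ i\<bar>)"
  have g2bound: "(g j x)\<^sup>2 \<le> C\<^sup>2" for j x
  proof -
    have "(g j x)\<^sup>2 = \<bar>g j x\<bar>\<^sup>2" by simp
    also have "\<dots> \<le> C\<^sup>2" unfolding C_def by (rule power_mono[OF gbound]) simp
    finally show ?thesis by simp
  qed
  have g2int: "integrable M (\<lambda>\<omega>. (g j (R \<omega>))\<^sup>2)" for j
    by (rule integrable_const_bound[where B="C\<^sup>2"]) (auto simp: g2bound)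
  define b where "b j \<omega> = (if z \<omega> $ j = 1 then 1 else 0 :: real)" for j \<omega>
  have bm[measurable]: "b j \<in> borel_measurable M" for j unfolding b_def by measurable
  have bint: "integrable M (b j)" for j
    by (rule integrable_const_bound[where B=1]) (auto simp: b_def)
  have Eb: "expectation (b j) = 1/2" for j
  proof -
    have "expectation (b j) = expectation (indicator {\<omega> \<in> space M. z \<omega> $ j = 1})"
      by (rule Bochner_Integration.integral_cong) (auto simp: b_def indicator_def)
    also have "\<dots> = 1/2"
    proof -
      have "{\<omega> \<in> space M. z \<omega> $ j = 1} \<inter> space M = {\<omega> \<in> space M. z \<omega> $ j = 1}" by auto
      then show ?thesis using assms(6)[of j] by simp
    qed
    finally show ?thesis .
  qed
  have AEz: "AE \<omega> in M. \<forall>j. z \<omega> $ j = b j \<omega>"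
  proof (subst AE_all_countable, intro allI)
    fix j show "AE \<omega> in M. z \<omega> $ j = b j \<omega>"
      using assms(5)[of j] by eventually_elim (auto simp: b_def)
  qed
  have indb: "indep_var borel (b j) borel (\<lambda>\<omega>. (g j (R \<omega>))\<^sup>2)" for j
  proof (rule indep_var_from_prod)
    fix A B :: "real set" assume A: "A \<in> sets borel" and B: "B \<in> sets borel"
    define A' where "A' = (\<lambda>x::real^'n. if x $ j = 1 then 1 else 0 :: real) -` A"
    define B' where "B' = (\<lambda>x. (g j x)\<^sup>2) -` B"
    have A': "A' \<in> sets borel"
    proof -
      have "(\<lambda>x::real^'n. if x $ j = 1 then 1 else 0 :: real) \<in> borel_measurable borel" by measurable
      then show ?thesis using A measurable_sets[of _ borel borel A] unfolding A'_def by force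
    qed
    have B': "B' \<in> sets borel"
    proof -
      have "(\<lambda>x. (g j x)\<^sup>2) \<in> borel_measurable borel" by measurable
      then show ?thesis using B measurable_sets[of _ borel borel B] unfolding B'_def by force
    qed
    have e1: "b j -` A \<inter> space M = {\<omega> \<in> space M. z \<omega> \<in> A'}"
      by (auto simp: b_def A'_def)
    have e2: "(\<lambda>\<omega>. (g j (R \<omega>))\<^sup>2) -` B \<inter> space M = {\<omega> \<in> space M. R \<omega> \<in> B'}"
      by (auto simp: B'_def)
    have e3: "b j -` A \<inter> space M \<inter> ((\<lambda>\<omega>. (g j (R \<omega>))\<^sup>2) -` B \<inter> space M)
        = {\<omega> \<in> space M. R \<omega> \<in> B' \<and> z \<omega> \<in> A'}"
      by (auto simp: b_def A'_def B'_def)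
    show "prob (b j -` A \<inter> space M \<inter> ((\<lambda>\<omega>. (g j (R \<omega>))\<^sup>2) -` B \<inter> space M)) =
         prob (b j -` A \<inter> space M) * prob ((\<lambda>\<omega>. (g j (R \<omega>))\<^sup>2) -` B \<inter> space M)"
    proof -
      have "{\<omega> \<in> space M. z \<omega> \<in> A'} \<inter> {\<omega> \<in> space M. R \<omega> \<in> B'} = {\<omega> \<in> space M. R \<omega> \<in> B' \<and> z \<omega> \<in> A'}"
        by auto
      then show ?thesis unfolding e1 e2 using assms(8)[OF B' A'] by (simp add: mult.commute)
    qed
  qed simp_all
  have Fform: "(norm (sqrt 2 *\<^sub>R (\<chi> j. z \<omega> $ j * (transpose (rownormalize (R \<omega>)) *v u) $ j)))\<^sup>2
      = 2 * (\<Sum>j\<in>UNIV. (z \<omega> $ j * g j (R \<omega>))\<^sup>2)" for \<omega>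
  proof -
    have "(norm (sqrt 2 *\<^sub>R (\<chi> j. z \<omega> $ j * g j (R \<omega>))))\<^sup>2
        = 2 * (norm (\<chi> j. z \<omega> $ j * g j (R \<omega>)))\<^sup>2"
      by (simp add: power_mult_distrib)
    also have "\<dots> = 2 * (\<Sum>j\<in>UNIV. (z \<omega> $ j * g j (R \<omega>))\<^sup>2)"
      by (simp add: normsq_vec)
    finally show ?thesis unfolding Wc .
  qed
  have "expectation (\<lambda>\<omega>. (norm (sqrt 2 *\<^sub>R (\<chi> j. z \<omega> $ j * (transpose (rownormalize (R \<omega>)) *v u) $ j)))\<^sup>2)
      = expectation (\<lambda>\<omega>. 2 * (\<Sum>j\<in>UNIV. (z \<omega> $ j * g j (R \<omega>))\<^sup>2))"
    unfolding Fform by (rule refl)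
  also have "\<dots> = expectation (\<lambda>\<omega>. 2 * (\<Sum>j\<in>UNIV. b j \<omega> * (g j (R \<omega>))\<^sup>2))"
  proof (rule integral_cong_AE)
    show "AE \<omega> in M. 2 * (\<Sum>j\<in>UNIV. (z \<omega> $ j * g j (R \<omega>))\<^sup>2) = 2 * (\<Sum>j\<in>UNIV. b j \<omega> * (g j (R \<omega>))\<^sup>2)"
      using AEz
    proof eventually_elim
      case (elim \<omega>)
      have "(z \<omega> $ j * g j (R \<omega>))\<^sup>2 = b j \<omega> * (g j (R \<omega>))\<^sup>2" for j
        using elim[rule_format, of j] by (cases "z \<omega> $ j = 1") (simp_all add: b_def power_mult_distrib)
      then show ?case by simp
    qed
  qed measurable
  also have "\<dots> = 2 * (\<Sum>j\<in>UNIV. expectation (\<lambda>\<omega>. b j \<omega> * (g j (R \<omega>))\<^sup>2))"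
    by (subst integral_mult_right_zero, subst Bochner_Integration.integral_sum)
       (auto intro: indep_var_integrable[OF indb bint g2int])
  also have "\<dots> = (\<Sum>j\<in>UNIV. expectation (\<lambda>\<omega>. (g j (R \<omega>))\<^sup>2))"
    by (simp add: indep_var_lebesgue_integral[OF indb bint g2int] Eb sum_distrib_left)
  also have "\<dots> = expectation (\<lambda>\<omega>. \<Sum>j\<in>UNIV. (g j (R \<omega>))\<^sup>2)"
    by (rule Bochner_Integration.integral_sum[symmetric]) (rule g2int)
  also have "\<dots> = expectation (\<lambda>\<omega>. \<Sum>i\<in>UNIV. \<Sum>k\<in>UNIV. u $ i * u $ k * (nr (R \<omega> $ i) \<bullet> nr (R \<omega> $ k)))"
  proof (rule Bochner_Integration.integral_cong[OF refl])
    fix \<omega>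
    have "(\<Sum>j\<in>UNIV. (g j (R \<omega>))\<^sup>2) = G (R \<omega>) \<bullet> G (R \<omega>)"
      by (simp add: gG normsq_vec[symmetric] power2_norm_eq_inner)
    also have "\<dots> = (\<Sum>i\<in>UNIV. \<Sum>k\<in>UNIV. u $ i * u $ k * (nr (R \<omega> $ i) \<bullet> nr (R \<omega> $ k)))"
      by (simp add: G_def inner_sum_left inner_sum_right sum_distrib_left algebra_simps)
         (simp add: inner_commute)
    finally show "(\<Sum>j\<in>UNIV. (g j (R \<omega>))\<^sup>2) = \<dots>" .
  qed
  also have "\<dots> = (\<Sum>i\<in>UNIV. \<Sum>k\<in>UNIV. u $ i * u $ k * expectation (\<lambda>\<omega>. nr (R \<omega> $ i) \<bullet> nr (R \<omega> $ k)))"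
  proof -
    have ii: "integrable M (\<lambda>\<omega>. nr (R \<omega> $ i) \<bullet> nr (R \<omega> $ k))" for i k
      by (rule integrable_const_bound[where B=1]) (auto simp: nr_inner_bound)
    show ?thesis
      by (subst Bochner_Integration.integral_sum, (auto intro!: ii)[1],
          rule sum.cong[OF refl], subst Bochner_Integration.integral_sum, (auto intro!: ii)[1])
         (simp add: ii)
  qed
  also have "\<dots> = (\<Sum>i\<in>UNIV. \<Sum>k\<in>UNIV. u $ i * u $ k * (if i = k then 1 else 0))"
    by (simp add: E_ik[OF assms(1,2,4)])
  also have "\<dots> = (norm u)\<^sup>2"
    unfolding normsq_vec by (simp add: power2_eq_square if_distrib sum.delta cong: if_cong)
  finally show ?thesis .
qed

end
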